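(* For every $n\in\mathbb{N}$, $n\ge1$, and all $\Delta,\Delta'\in\mathcal{P}_n$ with $\Delta\not\equiv\Delta'$: $d_\Delta(i)=d_{\Delta'}(i)$ for every $i\in\mathbb{Z}_n$ if and only if $f^{(\Delta)}_{128,n}=f^{(\Delta')}_{128,n}$.
   Context: Cells are indexed by $\mathbb{Z}_n=\{0,\dots,n-1\}$, indices modulo $n$. Rule $128$ has local rule $r_{128}(x_1,x_2,x_3)=x_1\wedge x_2\wedge x_3$ and global function $f_{128,n}(x)_i=r_{128}(x_{i-1},x_i,x_{i+1})$. An update schedule is an ordered partition $\Delta=(\Delta_1,\dots,\Delta_k)$ of $\mathbb{Z}_n$ into nonempty blocks; $\mathcal{P}_n$ is the set of them. For a block $B$ let $f^{(B)}(x)_i=f_{128,n}(x)_i$ if $i\in B$ and $x_i$ otherwise; $f^{(\Delta)}_{128,n}=f^{(\Delta_k)}\circ\cdots\circ f^{(\Delta_1)}$. (The paper phrases equality of dynamics as equality of transition digraphs with arcs $(x,f^{(\Delta)}_{128,n}(x))$, equivalent to equality of maps.) For $u,v\in\mathbb{Z}_n$ with $u\in\Delta_a$, $v\in\Delta_b$, $lab_\Delta((u,v))=\oplus$ if $b\le a$ and $\ominus$ if $a<b$. Define $d^{\leftarrow}_\Delta(i)=\max\{k\in\mathbb{N}:\forall j,\,0<j<k\Rightarrow lab_\Delta((i-j,i-j+1))=\ominus\}$, $d^{\rightarrow}_\Delta(i)=\max\{k\in\mathbb{N}:\forall j,\,0<j<k\Rightarrow lab_\Delta((i+j,i+j-1))=\ominus\}$,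 and $d_\Delta(i)=\{i-k\bmod n:0\le k\le d^{\leftarrow}_\Delta(i)\}\cup\{i+k\bmod n:0\le k\le d^{\rightarrow}_\Delta(i)\}$. $\Delta\equiv\Delta'$ iff $lab_\Delta$ and $lab_{\Delta'}$ agree on every arc $(i,i+1)$ and $(i+1,i)$, $i\in\mathbb{Z}_n$. *)

theory Defs
  imports Main
begin

text \<open>Cells are integers 0..n-1 (indices taken modulo n); configurations are maps int => bool
  (only the values on cells 0..n-1 matter).\<close>

definition r128 :: "bool \<Rightarrow> bool \<Rightarrow> bool \<Rightarrow> bool" where
  "r128 x1 x2 x3 = (x1 \<and> x2 \<and> x3)"

definition f128 :: "int \<Rightarrow> (int \<Rightarrow> bool) \<Rightarrow> int \<Rightarrow> bool" where
  "f128 n x i = r128 (x ((i - 1) mod n)) (x (i mod n)) (x ((i + 1) mod n))"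

definition is_schedule :: "int \<Rightarrow> int set list \<Rightarrow> bool" where
  "is_schedule n D \<longleftrightarrow>
     (\<forall>B\<in>set D. B \<noteq> {}) \<and>
     (\<forall>a b. a < length D \<and> b < length D \<and> a \<noteq> b \<longrightarrow> D ! a \<inter> D ! b = {}) \<and>
     \<Union>(set D) = {0..<n}"

definition block_update :: "int \<Rightarrow> int set \<Rightarrow> (int \<Rightarrow> bool) \<Rightarrow> int \<Rightarrow> bool" where
  "block_update n B x i = (if i \<in> B then f128 n x i else x i)"

definition sched_map :: "int \<Rightarrow> int set list \<Rightarrow> (int \<Rightarrow> bool) \<Rightarrow> int \<Rightarrow> bool" where
  "sched_map n D = fold (\<lambda>B F. block_update n B \<circ> F) D id"

definition blk :: "int set list \<Rightarrow> int \<Rightarrow> nat" where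
  "blk D u = (THE a. a < length D \<and> u \<in> D ! a)"

datatype label = Oplus | Ominus

definition lab :: "int set list \<Rightarrow> int \<Rightarrow> int \<Rightarrow> label" where
  "lab D u v = (if blk D v \<le> blk D u then Oplus else Ominus)"

definition dleft :: "int \<Rightarrow> int set list \<Rightarrow> int \<Rightarrow> nat" where
  "dleft n D i = (GREATEST k::nat. \<forall>j::nat. 0 < j \<and> j < k \<longrightarrow>
       lab D ((i - int j) mod n) ((i - int j + 1) mod n) = Ominus)"

definition dright :: "int \<Rightarrow> int set list \<Rightarrow> int \<Rightarrow> nat" where
  "dright n D i = (GREATEST k::nat. \<forall>j::nat. 0 < j \<and> j < k \<longrightarrow>
       lab D ((i + int j) mod n) ((i + int j - 1) mod n) = Ominus)"

definition dset :: "int \<Rightarrow> int set list \<Rightarrow> int \<Rightarrow> int set" where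
  "dset n D i = {(i - int k) mod n | k. k \<le> dleft n D i} \<union> {(i + int k) mod n | k. k \<le> dright n D i}"

definition sched_equiv :: "int \<Rightarrow> int set list \<Rightarrow> int set list \<Rightarrow> bool" where
  "sched_equiv n D D' \<longleftrightarrow>
     (\<forall>i\<in>{0..<n}. lab D i ((i + 1) mod n) = lab D' i ((i + 1) mod n) \<and>
                  lab D ((i + 1) mod n) i = lab D' ((i + 1) mod n) i)"

end

theory Submission imports Defs begin

locale sch = fixes n :: int and D :: "int set list"
  assumes n1: "n \<ge> 1" and sch: "is_schedule n D"
begin

lemma blk_in: assumes "u \<in> {0..<n}" shows "blk D u < length D \<and> u \<in> D ! blk D u"
proof -
  from sch assms obtain B where "B \<in> set D" "u \<in> B" unfolding is_schedule_def by blast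
  then obtain a where a: "a < length D" "u \<in> D!a" by (auto simp: in_set_conv_nth)
  have "\<exists>!a. a < length D \<and> u \<in> D!a" using a sch unfolding is_schedule_def by blast
  then show ?thesis unfolding blk_def by (rule theI')
qed

lemma blk_uniq: assumes "a < length D" "u \<in> D!a" shows "blk D u = a"
proof -
  have "u \<in> {0..<n}" using sch assms unfolding is_schedule_def by (metis UnionI nth_mem)
  then have "blk D u < length D" "u \<in> D ! blk D u" using blk_in by auto
  then show ?thesis using assms sch unfolding is_schedule_def by blast
qed

lemma notin_range: assumes "u \<notin> {0..<n}" "a < length D" shows "u \<notin> D!a"
  using sch assms unfolding is_schedule_def by (metis UnionI nth_mem)

lemma mod_in: "x mod n \<in> {0..<n}" using n1 by auto

lemma lab_om: "lab D u v = Ominus \<longleftrightarrow> blk D u < blk D v"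
  by (auto simp: lab_def)

definition U :: "nat \<Rightarrow> (int\<Rightarrow>bool) \<Rightarrow> int \<Rightarrow> bool" where
  "U t = fold (\<lambda>B F. block_update n B \<circ> F) (take t D) id"

lemma U0: "U 0 x = x" by (simp add: U_def)

lemma U_Suc: "t < length D \<Longrightarrow> U (Suc t) x = block_update n (D!t) (U t x)"
  by (simp add: U_def take_Suc_conv_app_nth)

lemma U_len: "U (length D) = sched_map n D" by (simp add: U_def sched_map_def)

lemma U_A: "i \<in> {0..<n} \<Longrightarrow> t \<le> blk D i \<Longrightarrow> U t x i = x i"
proof (induction t)
  case 0 then show ?case by (simp add: U0)
next
  case (Suc t)
  have "t < length D" using Suc blk_in by fastforce
  moreover have "i \<notin> D!t" using Suc blk_uniq \<open>t < length D\<close> by fastforce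
  ultimately show ?case using Suc by (simp add: U_Suc block_update_def)
qed

lemma U_A': "i \<notin> {0..<n} \<Longrightarrow> t \<le> length D \<Longrightarrow> U t x i = x i"
proof (induction t)
  case 0 then show ?case by (simp add: U0)
next
  case (Suc t)
  then show ?case using notin_range[of i t] by (simp add: U_Suc block_update_def)
qed

lemma U_B: "i \<in> {0..<n} \<Longrightarrow> blk D i < t \<Longrightarrow> t \<le> length D \<Longrightarrow> U t x i = U (Suc (blk D i)) x i"
proof (induction t)
  case 0 then show ?case by simp
next
  case (Suc t)
  show ?case
  proof (cases "blk D i = t")
    case True then show ?thesis by simp
  next
    case False
    then have "i \<notin> D!t" using Suc blk_uniq by fastforce
    then show ?thesis using Suc False by (simp add: U_Suc block_update_def)
  qed
qed

definition PL where "PL i k = (\<forall>j::nat. 0 < j \<and> j < k \<longrightarrow>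
       lab D ((i - int j) mod n) ((i - int j + 1) mod n) = Ominus)"
definition PR where "PR i k = (\<forall>j::nat. 0 < j \<and> j < k \<longrightarrow>
       lab D ((i + int j) mod n) ((i + int j - 1) mod n) = Ominus)"

lemma dleft_PL: "dleft n D i = Greatest (PL i)" unfolding dleft_def PL_def ..
lemma dright_PR: "dright n D i = Greatest (PR i)" unfolding dright_def PR_def ..

lemma PL_bound: assumes "PL i k" shows "k \<le> nat n"
proof (rule ccontr)
  assume c: "\<not> k \<le> nat n"
  have "m < k \<longrightarrow> blk D ((i - int m) mod n) + m \<le> blk D (i mod n)" for m
  proof (induction m)
    case 0 then show ?case by simp
  next
    case (Suc m)
    show ?case
    proof
      assume "Suc m < k"
      then have "lab D ((i - int (Suc m)) mod n) ((i - int (Suc m) + 1) mod n) = Ominus"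
        using assms unfolding PL_def by blast
      moreover have "i - int (Suc m) + 1 = i - int m" by simp
      ultimately have "blk D ((i - int (Suc m)) mod n) < blk D ((i - int m) mod n)"
        by (simp add: lab_om)
      then show "blk D ((i - int (Suc m)) mod n) + Suc m \<le> blk D (i mod n)"
        using Suc \<open>Suc m < k\<close> by simp
    qed
  qed
  from this[of "nat n"] c n1 show False by simp
qed

lemma PR_bound: assumes "PR i k" shows "k \<le> nat n"
proof (rule ccontr)
  assume c: "\<not> k \<le> nat n"
  have "m < k \<longrightarrow> blk D ((i + int m) mod n) + m \<le> blk D (i mod n)" for m
  proof (induction m)
    case 0 then show ?case by simp
  next
    case (Suc m)
    show ?case
    proof
      assume "Suc m < k"
      then have "lab D ((i + int (Suc m)) mod n) ((i + int (Suc m) - 1) mod n) = Ominus"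
        using assms unfolding PR_def by blast
      moreover have "i + int (Suc m) - 1 = i + int m" by simp
      ultimately have "blk D ((i + int (Suc m)) mod n) < blk D ((i + int m) mod n)"
        by (simp add: lab_om)
      then show "blk D ((i + int (Suc m)) mod n) + Suc m \<le> blk D (i mod n)"
        using Suc \<open>Suc m < k\<close> by simp
    qed
  qed
  from this[of "nat n"] c n1 show False by simp
qed

end
context sch begin

lemma PL_Suc: assumes c: "blk D ((i-1) mod n) < blk D (i mod n)"
  shows "PL i (Suc k) \<longleftrightarrow> PL ((i-1) mod n) k"
proof
  assume h: "PL i (Suc k)"
  show "PL ((i-1) mod n) k" unfolding PL_def
  proof (intro allI impI)
    fix j :: nat assume "0 < j \<and> j < k"
    then have "lab D ((i - int (Suc j)) mod n) ((i - int (Suc j) + 1) mod n) = Ominus"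
      using h unfolding PL_def by blast
    moreover have "((i - 1) mod n - int j) mod n = (i - int (Suc j)) mod n"
      by (simp add: mod_diff_left_eq algebra_simps)
    moreover have "((i - 1) mod n - int j + 1) mod n = (i - int (Suc j) + 1) mod n"
      using mod_add_left_eq[of "i-1" n "- int j + 1"] by (simp add: algebra_simps)
    ultimately show "lab D (((i - 1) mod n - int j) mod n) (((i - 1) mod n - int j + 1) mod n) = Ominus"
      by simp
  qed
next
  assume h: "PL ((i-1) mod n) k"
  show "PL i (Suc k)" unfolding PL_def
  proof (intro allI impI)
    fix j :: nat assume j: "0 < j \<and> j < Suc k"
    show "lab D ((i - int j) mod n) ((i - int j + 1) mod n) = Ominus"
    proof (cases "j = 1")
      case True then show ?thesis using c by (simp add: lab_om)
    next
      case False
      then obtain j' where j': "j = Suc j'" "0 < j'" "j' < k" using j by (cases j) auto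
      then have "lab D (((i - 1) mod n - int j') mod n) (((i - 1) mod n - int j' + 1) mod n) = Ominus"
        using h unfolding PL_def by simp
      moreover have "((i - 1) mod n - int j') mod n = (i - int (Suc j')) mod n"
        by (simp add: mod_diff_left_eq algebra_simps)
      moreover have "((i - 1) mod n - int j' + 1) mod n = (i - int (Suc j') + 1) mod n"
        using mod_add_left_eq[of "i-1" n "- int j' + 1"] by (simp add: algebra_simps)
      ultimately show ?thesis using j' by simp
    qed
  qed
qed

lemma PR_Suc: assumes c: "blk D ((i+1) mod n) < blk D (i mod n)"
  shows "PR i (Suc k) \<longleftrightarrow> PR ((i+1) mod n) k"
proof
  assume h: "PR i (Suc k)"
  show "PR ((i+1) mod n) k" unfolding PR_def
  proof (intro allI impI)
    fix j :: nat assume "0 < j \<and> j < k"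
    then have "lab D ((i + int (Suc j)) mod n) ((i + int (Suc j) - 1) mod n) = Ominus"
      using h unfolding PR_def by blast
    moreover have "((i + 1) mod n + int j) mod n = (i + int (Suc j)) mod n"
      using mod_add_left_eq[of "i+1" n "int j"] by (simp add: algebra_simps)
    moreover have "((i + 1) mod n + int j - 1) mod n = (i + int (Suc j) - 1) mod n"
      using mod_add_left_eq[of "i+1" n "int j - 1"] by (simp add: algebra_simps)
    ultimately show "lab D (((i + 1) mod n + int j) mod n) (((i + 1) mod n + int j - 1) mod n) = Ominus"
      by simp
  qed
next
  assume h: "PR ((i+1) mod n) k"
  show "PR i (Suc k)" unfolding PR_def
  proof (intro allI impI)
    fix j :: nat assume j: "0 < j \<and> j < Suc k"
    show "lab D ((i + int j) mod n) ((i + int j - 1) mod n) = Ominus"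
    proof (cases "j = 1")
      case True then show ?thesis using c by (simp add: lab_om add.commute)
    next
      case False
      then obtain j' where j': "j = Suc j'" "0 < j'" "j' < k" using j by (cases j) auto
      then have "lab D (((i + 1) mod n + int j') mod n) (((i + 1) mod n + int j' - 1) mod n) = Ominus"
        using h unfolding PR_def by simp
      moreover have "((i + 1) mod n + int j') mod n = (i + int (Suc j')) mod n"
        using mod_add_left_eq[of "i+1" n "int j'"] by (simp add: algebra_simps)
      moreover have "((i + 1) mod n + int j' - 1) mod n = (i + int (Suc j') - 1) mod n"
        using mod_add_left_eq[of "i+1" n "int j' - 1"] by (simp add: algebra_simps)
      ultimately show ?thesis using j' by simp
    qed
  qed
qed

lemma dleft_rec: "dleft n D i = (if blk D ((i-1) mod n) < blk D (i mod n)
    then Suc (dleft n D ((i-1) mod n)) else 1)"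
proof (cases "blk D ((i-1) mod n) < blk D (i mod n)")
  case True
  let ?g = "Greatest (PL ((i-1) mod n))"
  have g: "PL ((i-1) mod n) ?g" by (rule GreatestI_nat[of _ 0 "nat n"]) (auto simp: PL_def intro: PL_bound)
  have "Greatest (PL i) = Suc ?g"
  proof (rule Greatest_equality)
    show "PL i (Suc ?g)" using g PL_Suc[OF True] by simp
  next
    fix y assume "PL i y"
    then show "y \<le> Suc ?g"
    proof (cases y)
      case (Suc y')
      then have "PL ((i-1) mod n) y'" using PL_Suc[OF True] \<open>PL i y\<close> by simp
      then show ?thesis using Suc Greatest_le_nat[of _ y' "nat n"] PL_bound by fastforce
    qed simp
  qed
  then show ?thesis using True by (simp add: dleft_PL)
next
  case False
  have "Greatest (PL i) = 1"
  proof (rule Greatest_equality)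
    show "PL i 1" by (simp add: PL_def)
  next
    fix y assume h: "PL i y"
    show "y \<le> 1"
    proof (rule ccontr)
      assume "\<not> y \<le> 1"
      then have "lab D ((i - int 1) mod n) ((i - int 1 + 1) mod n) = Ominus" using h unfolding PL_def by auto
      then show False using False by (simp add: lab_om)
    qed
  qed
  then show ?thesis using False by (simp add: dleft_PL)
qed

lemma dright_rec: "dright n D i = (if blk D ((i+1) mod n) < blk D (i mod n)
    then Suc (dright n D ((i+1) mod n)) else 1)"
proof (cases "blk D ((i+1) mod n) < blk D (i mod n)")
  case True
  let ?g = "Greatest (PR ((i+1) mod n))"
  have g: "PR ((i+1) mod n) ?g" by (rule GreatestI_nat[of _ 0 "nat n"]) (auto simp: PR_def intro: PR_bound)
  have "Greatest (PR i) = Suc ?g"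
  proof (rule Greatest_equality)
    show "PR i (Suc ?g)" using g PR_Suc[OF True] by simp
  next
    fix y assume "PR i y"
    then show "y \<le> Suc ?g"
    proof (cases y)
      case (Suc y')
      then have "PR ((i+1) mod n) y'" using PR_Suc[OF True] \<open>PR i y\<close> by simp
      then show ?thesis using Suc Greatest_le_nat[of _ y' "nat n"] PR_bound by fastforce
    qed simp
  qed
  then show ?thesis using True by (simp add: dright_PR)
next
  case False
  have "Greatest (PR i) = 1"
  proof (rule Greatest_equality)
    show "PR i 1" by (simp add: PR_def)
  next
    fix y assume h: "PR i y"
    show "y \<le> 1"
    proof (rule ccontr)
      assume "\<not> y \<le> 1"
      then have "lab D ((i + int 1) mod n) ((i + int 1 - 1) mod n) = Ominus" using h unfolding PR_def by auto
      then show False using False by (simp add: lab_om)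
    qed
  qed
  then show ?thesis using False by (simp add: dright_PR)
qed

end
context sch begin

definition Ls where "Ls i = {(i - int k) mod n | k. k \<le> dleft n D i}"
definition Rs where "Rs i = {(i + int k) mod n | k. k \<le> dright n D i}"

lemma dset_LR: "dset n D i = Ls i \<union> Rs i" by (simp add: dset_def Ls_def Rs_def)

lemma self_Ls: "i mod n \<in> Ls i" unfolding Ls_def by (rule CollectI, rule exI[of _ 0]) simp
lemma self_Rs: "i mod n \<in> Rs i" unfolding Rs_def by (rule CollectI, rule exI[of _ 0]) simp

lemma Ls_rec1: assumes c: "blk D ((i-1) mod n) < blk D (i mod n)"
  shows "Ls i = insert (i mod n) (Ls ((i-1) mod n))"
proof -
  have d: "dleft n D i = Suc (dleft n D ((i-1) mod n))" using c dleft_rec[of i] by simp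
  have e: "((i - 1) mod n - int k) mod n = (i - int (Suc k)) mod n" for k
    by (simp add: mod_diff_left_eq algebra_simps)
  show ?thesis
  proof (rule set_eqI, rule iffI)
    fix y assume "y \<in> Ls i"
    then obtain k where k: "y = (i - int k) mod n" "k \<le> dleft n D i" unfolding Ls_def by blast
    show "y \<in> insert (i mod n) (Ls ((i-1) mod n))"
    proof (cases k)
      case 0 then show ?thesis using k by simp
    next
      case (Suc k')
      then show ?thesis using k d e[of k'] unfolding Ls_def by auto
    qed
  next
    fix y assume "y \<in> insert (i mod n) (Ls ((i-1) mod n))"
    then show "y \<in> Ls i"
    proof
      assume "y = i mod n" then show ?thesis using self_Ls by simp
    next
      assume "y \<in> Ls ((i-1) mod n)"
      then obtain k where k: "y = ((i-1) mod n - int k) mod n" "k \<le> dleft n D ((i-1) mod n)"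
        unfolding Ls_def by blast
      then show ?thesis using d e[of k] unfolding Ls_def by (auto intro!: exI[of _ "Suc k"])
    qed
  qed
qed

lemma Ls_rec2: assumes c: "\<not> blk D ((i-1) mod n) < blk D (i mod n)"
  shows "Ls i = {i mod n, (i-1) mod n}"
proof -
  have d: "dleft n D i = 1" using c dleft_rec[of i] by simp
  have k: "(k::nat) \<le> 1 \<longleftrightarrow> k = 0 \<or> k = 1" for k by auto
  show ?thesis unfolding Ls_def d k by force
qed

lemma Rs_rec1: assumes c: "blk D ((i+1) mod n) < blk D (i mod n)"
  shows "Rs i = insert (i mod n) (Rs ((i+1) mod n))"
proof -
  have d: "dright n D i = Suc (dright n D ((i+1) mod n))" using c dright_rec[of i] by simp
  have e: "((i + 1) mod n + int k) mod n = (i + int (Suc k)) mod n" for k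
    using mod_add_left_eq[of "i+1" n "int k"] by (simp add: algebra_simps)
  show ?thesis
  proof (rule set_eqI, rule iffI)
    fix y assume "y \<in> Rs i"
    then obtain k where k: "y = (i + int k) mod n" "k \<le> dright n D i" unfolding Rs_def by blast
    show "y \<in> insert (i mod n) (Rs ((i+1) mod n))"
    proof (cases k)
      case 0 then show ?thesis using k by simp
    next
      case (Suc k')
      then show ?thesis using k d e[of k'] unfolding Rs_def by auto
    qed
  next
    fix y assume "y \<in> insert (i mod n) (Rs ((i+1) mod n))"
    then show "y \<in> Rs i"
    proof
      assume "y = i mod n" then show ?thesis using self_Rs by simp
    next
      assume "y \<in> Rs ((i+1) mod n)"
      then obtain k where k: "y = ((i+1) mod n + int k) mod n" "k \<le> dright n D ((i+1) mod n)"
        unfolding Rs_def by blast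
      then show ?thesis using d e[of k] unfolding Rs_def by (auto intro!: exI[of _ "Suc k"])
    qed
  qed
qed

lemma Rs_rec2: assumes c: "\<not> blk D ((i+1) mod n) < blk D (i mod n)"
  shows "Rs i = {i mod n, (i+1) mod n}"
proof -
  have d: "dright n D i = 1" using c dright_rec[of i] by simp
  have k: "(k::nat) \<le> 1 \<longleftrightarrow> k = 0 \<or> k = 1" for k by auto
  show ?thesis unfolding Rs_def d k by force
qed

end
context sch begin

lemma modid: "i \<in> {0..<n} \<Longrightarrow> i mod n = i" by simp

lemma main_sem: "i \<in> {0..<n} \<Longrightarrow> U (Suc (blk D i)) x i = (\<forall>j\<in>dset n D i. x j)"
proof (induction "blk D i" arbitrary: i rule: less_induct)
  case less
  define p where "p = (i-1) mod n"
  define s where "s = (i+1) mod n"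
  have ir: "i mod n = i" using less.prems by simp
  have pr: "p \<in> {0..<n}" "p mod n = p" using n1 by (auto simp: p_def)
  have sr: "s \<in> {0..<n}" "s mod n = s" using n1 by (auto simp: s_def)
  have ps: "(p + 1) mod n = i" unfolding p_def using mod_add_left_eq[of "i-1" n 1] ir by simp
  have sp: "(s - 1) mod n = i" unfolding s_def using mod_diff_left_eq[of "i+1" n 1] ir by simp
  have bi: "blk D i < length D" "i \<in> D ! blk D i" using blk_in less.prems by auto
  have N: "U (Suc (blk D i)) x i = (U (blk D i) x p \<and> x i \<and> U (blk D i) x s)"
    using bi U_A[OF less.prems, of "blk D i" x] ir
    by (simp add: U_Suc block_update_def f128_def r128_def p_def s_def)
  have L: "(U (blk D i) x p \<and> x i) = (\<forall>j\<in>Ls i. x j)"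
  proof (cases "blk D p < blk D i")
    case True
    have "U (blk D i) x p = U (Suc (blk D p)) x p" using U_B[OF pr(1) True] bi by simp
    also have "\<dots> = (\<forall>j\<in>Ls p \<union> Rs p. x j)" using less.hyps[OF True pr(1)] dset_LR by simp
    also have "Rs p = {p, i}" using Rs_rec2[of p] True pr(2) ps by simp
    finally have e: "U (blk D i) x p = (\<forall>j\<in>Ls p \<union> {p, i}. x j)" .
    have "Ls i = insert i (Ls p)" using Ls_rec1[of i] True ir by (simp add: p_def)
    moreover have "p \<in> Ls p" using self_Ls[of p] pr(2) by simp
    ultimately show ?thesis using e by auto
  next
    case False
    have "U (blk D i) x p = x p" using U_A[OF pr(1)] False by simp
    moreover have "Ls i = {i, p}" using Ls_rec2[of i] False ir by (simp add: p_def)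
    ultimately show ?thesis by auto
  qed
  have R: "(U (blk D i) x s \<and> x i) = (\<forall>j\<in>Rs i. x j)"
  proof (cases "blk D s < blk D i")
    case True
    have "U (blk D i) x s = U (Suc (blk D s)) x s" using U_B[OF sr(1) True] bi by simp
    also have "\<dots> = (\<forall>j\<in>Ls s \<union> Rs s. x j)" using less.hyps[OF True sr(1)] dset_LR by simp
    also have "Ls s = {s, i}" using Ls_rec2[of s] True sr(2) sp by simp
    finally have e: "U (blk D i) x s = (\<forall>j\<in>{s, i} \<union> Rs s. x j)" .
    have "Rs i = insert i (Rs s)" using Rs_rec1[of i] True ir by (simp add: s_def)
    moreover have "s \<in> Rs s" using self_Rs[of s] sr(2) by simp
    ultimately show ?thesis using e by auto
  next
    case False
    have "U (blk D i) x s = x s" using U_A[OF sr(1)] False by simp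
    moreover have "Rs i = {i, s}" using Rs_rec2[of i] False ir by (simp add: s_def)
    ultimately show ?thesis by auto
  qed
  show ?case using N L R dset_LR[of i] by auto
qed

lemma sem: "sched_map n D x i = (if i \<in> {0..<n} then (\<forall>j\<in>dset n D i. x j) else x i)"
proof (cases "i \<in> {0..<n}")
  case True
  then have "blk D i < length D" using blk_in by blast
  then show ?thesis using True U_B[OF True, of "length D" x] main_sem[OF True] U_len by simp
next
  case False
  then show ?thesis using U_A'[OF False, of "length D" x] U_len by (simp only: if_False)
qed

lemma dset_range: "dset n D i \<subseteq> {0..<n}"
  using n1 unfolding dset_def by auto

end

theorem mainTheorem17:
  fixes n :: int and D D' :: "int set list"
  assumes "n \<ge> 1"
    and "is_schedule n D" and "is_schedule n D'"
    and "\<not> sched_equiv n D D'"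
  shows "(\<forall>i\<in>{0..<n}. dset n D i = dset n D' i) \<longleftrightarrow> sched_map n D = sched_map n D'"
proof -
  interpret A: sch n D using assms by unfold_locales
  interpret B: sch n D' using assms by unfold_locales
  show ?thesis
  proof
    assume h: "\<forall>i\<in>{0..<n}. dset n D i = dset n D' i"
    show "sched_map n D = sched_map n D'"
      by (rule ext, rule ext) (simp add: A.sem B.sem h)
  next
    assume h: "sched_map n D = sched_map n D'"
    show "\<forall>i\<in>{0..<n}. dset n D i = dset n D' i"
    proof
      fix i assume i: "i \<in> {0..<n}"
      show "dset n D i = dset n D' i"
      proof (rule set_eqI)
        fix j
        have "sched_map n D (\<lambda>k. k \<noteq> j) i = sched_map n D' (\<lambda>k. k \<noteq> j) i" using h by simp
        then have "(\<forall>k\<in>dset n D i. k \<noteq> j) = (\<forall>k\<in>dset n D' i. k \<noteq> j)"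
          using i by (simp add: A.sem B.sem)
        then show "j \<in> dset n D i \<longleftrightarrow> j \<in> dset n D' i" by blast
      qed
    qed
  qed
qed

end
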